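(* Let $G$ be a finite group with the supercharacter theory for which $\mathrm{scf}(G)=\mathbb{C}\text{-span}\{\mathbb{1},\mathbf{reg}\}$, and let $\iota,\alpha,\beta\in\mathrm{scf}(G)$ with $\langle\iota,\alpha\rangle=\langle\iota,\beta\rangle=1$. Let $S$ be the antipode of $\mathcal{H}_{(\iota,\alpha,\beta)}$ and $n\ge1$. (Case $\alpha=\beta$.) If $\tau\in\mathrm{scf}(G)$ is nonzero with $\langle\tau,\beta\rangle=0$ and $\mathbb{C}\text{-span}\{\tau,\iota\}=\mathrm{scf}(G)$, then $S(\tau^{\otimes(n-1)}\otimes\chi^{()})=-\tau^{\otimes(n-1)}\otimes\chi^{()}$. (Case $\alpha\ne\beta$.) If $\tau\in\mathrm{scf}(G)$ satisfies $\langle\tau,\alpha\rangle=1$ and $\langle\tau,\beta\rangle=0$, then $S(\tau^{\otimes(n-1)}\otimes\chi^{()})=-(\tau-\iota)^{\otimes(n-1)}\otimes\chi^{()}$.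
   Context: $G$ is a nontrivial finite group; the supercharacter theory has superclasses $\{1\}$ and $G\setminus\{1\}$ and supercharacters $\mathbb{1}$ (trivial character) and $\mathbf{reg}-\mathbb{1}$ ($\mathbf{reg}$ the regular character), so $\mathrm{scf}(G)$ is the space of functions constant on $G\setminus\{1\}$; $\langle\psi,\gamma\rangle=|G|^{-1}\sum_g\psi(g)\overline{\gamma(g)}$. For $n\ge1$, $G^{n-1}=G\times\cdots\times G\times\{1\}$ ($n-1$ copies of $G$), $\mathrm{scf}(G^{n-1})$ is spanned by $\psi_1\otimes\cdots\otimes\psi_{n-1}\otimes\chi^{()}:(g_1,\dots,g_{n-1},1)\mapsto\prod\psi_j(g_j)$ ($\chi^{()}$ trivial character of the trivial group); $\mathrm{scf}(G^{-1}):=\mathbb{C}\chi^\emptyset$. $\mathcal{H}_{(\iota,\alpha,\beta)}=\bigoplus_{n\ge0}\mathrm{scf}(G^{n-1})$ is the graded connected Hopf algebra with unit $\chi^\emptyset$, product $(\gamma_1\otimes\cdots\otimes\gamma_{m-1}\otimes\chi^{()})\cdot(\psi_1\otimes\cdots\otimes\psi_{n-1}\otimes\chi^{()})=\gamma_1\otimes\cdots\otimes\gamma_{m-1}\otimes\iota\otimes\psi_1\otimes\cdots\otimes\psi_{n-1}\otimes\chi^{()}$, coproduct $\Delta(\psi)=\sum_{A\subseteq[n]}\psi^{A}\otimes\psi^{[n]\setminus A}$ for $\psi=\psi_1\otimes\cdots\otimes\psi_{n-1}\otimes\chi^{()}$, where $\psi^\emptyset=\chi^\emptyset$; for nonempty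 $A=\{a_1<\dots<a_k\}$, $\psi^{A}=\lambda_A\,x_{a_1}\otimes\cdots\otimes x_{a_{k-1}}\otimes\chi^{()}$ with $x_{a_i}=\psi_{a_i}$ if $a_{i+1}=a_i+1$, else $\langle\psi_{a_i},\alpha\rangle\iota$, and $\lambda_A=\langle\psi_{a_k},\alpha\rangle$ if $a_k<n$, $1$ if $a_k=n$; $\psi^{[n]\setminus A}$ is the same with $\beta$ in place of $\alpha$. *)

theory Defs
  imports Complex_Main "HOL-Algebra.Group"
begin

text \<open>Superclass functions for the supercharacter theory of a finite group G with
superclasses {1} and G - {1}: functions constant on carrier G - {1}.
Only values on carrier G are meaningful.\<close>

definition scf :: "('g, 'b) monoid_scheme \<Rightarrow> ('g \<Rightarrow> complex) \<Rightarrow> bool" where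
  "scf G f \<longleftrightarrow> (\<forall>x\<in>carrier G. \<forall>y\<in>carrier G. x \<noteq> \<one>\<^bsub>G\<^esub> \<longrightarrow> y \<noteq> \<one>\<^bsub>G\<^esub> \<longrightarrow> f x = f y)"

definition ip :: "('g, 'b) monoid_scheme \<Rightarrow> ('g \<Rightarrow> complex) \<Rightarrow> ('g \<Rightarrow> complex) \<Rightarrow> complex" where
  "ip G \<psi> \<gamma> = (\<Sum>g\<in>carrier G. \<psi> g * cnj (\<gamma> g)) / of_nat (card (carrier G))"

text \<open>Homogeneous elements of degree n \<ge> 1 of H, i.e. elements of scf(G^(n-1)),
are represented as functions on lists (g_1,...,g_(n-1)) of group elements
(the last coordinate 1 of the trivial group is suppressed); they vanish on lists
of other lengths. The pure tensor psi_1 \<otimes> ... \<otimes> psi_(n-1) \<otimes> chi^() is:\<close>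

definition tens :: "('g \<Rightarrow> complex) list \<Rightarrow> 'g list \<Rightarrow> complex" where
  "tens \<psi>s gs = (if length gs = length \<psi>s then (\<Prod>i<length \<psi>s. (\<psi>s ! i) (gs ! i)) else 0)"

text \<open>Product of a degree-m element f with a degree-n element h (m, n \<ge> 1), bilinear
extension of the product on pure tensors: (f \<cdot> h)(g_1..g_(m+n-1)) =
f(g_1..g_(m-1)) iota(g_m) h(g_(m+1)..g_(m+n-1)).\<close>

definition hprod :: "('g \<Rightarrow> complex) \<Rightarrow> nat \<Rightarrow> ('g list \<Rightarrow> complex) \<Rightarrow> ('g list \<Rightarrow> complex) \<Rightarrow> 'g list \<Rightarrow> complex" where
  "hprod \<iota> m f h gs = (if m \<le> length gs then f (take (m - 1) gs) * \<iota> (gs ! (m - 1)) * h (drop m gs) else 0)"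

text \<open>Coproduct components: for psi = psi_1 \<otimes> ... \<otimes> psi_(n-1) \<otimes> chi^() (n = length psis + 1)
and nonempty A \<subseteq> {1..n}, psi^A (w.r.t. alpha) = cop_coef * tens cop_facs.\<close>

definition cop_coef :: "('g, 'b) monoid_scheme \<Rightarrow> ('g \<Rightarrow> complex) \<Rightarrow> ('g \<Rightarrow> complex) list \<Rightarrow> nat set \<Rightarrow> complex" where
  "cop_coef G \<alpha> \<psi>s A = (if Max A < length \<psi>s + 1 then ip G (\<psi>s ! (Max A - 1)) \<alpha> else 1)"

definition cop_facs :: "('g, 'b) monoid_scheme \<Rightarrow> ('g \<Rightarrow> complex) \<Rightarrow> ('g \<Rightarrow> complex) \<Rightarrow> ('g \<Rightarrow> complex) list \<Rightarrow> nat set \<Rightarrow> ('g \<Rightarrow> complex) list" where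
  "cop_facs G \<iota> \<alpha> \<psi>s A = map (\<lambda>a. if a + 1 \<in> A then \<psi>s ! (a - 1) else (\<lambda>g. ip G (\<psi>s ! (a - 1)) \<alpha> * \<iota> g))
      (butlast (sorted_list_of_set A))"

lemma cop_facs_length:
  "finite A \<Longrightarrow> length (cop_facs G \<iota> \<alpha> \<psi>s A) = card A - 1"
  by (simp add: cop_facs_def)

lemma cop_facs_shorter:
  assumes "A \<subseteq> {1..length \<psi>s + 1}" "A \<noteq> {}" "A \<noteq> {1..length \<psi>s + 1}"
  shows "length (cop_facs G \<iota> \<alpha> \<psi>s A) < length \<psi>s"
proof -
  have c: "card A < card {1..length \<psi>s + 1}" using assms by (intro psubset_card_mono) auto
  have "finite A" using assms finite_subset by blast
  hence "card A > 0" using assms by (simp add: card_gt_0_iff)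
  thus ?thesis using c \<open>finite A\<close> by (simp add: cop_facs_length)
qed

text \<open>Antipode on pure tensors, via the standard recursion for graded connected Hopf
algebras: for psi of degree n \<ge> 1,
 S(psi) = - sum_{A \<subset> [n], A \<noteq> [n]} S(psi^A) \<cdot> psi^([n]-A), with S(chi^emptyset) = chi^emptyset;
the A = {} term is psi itself. (S is linear; the scalars of psi^A are pulled out.)\<close>

function antipode :: "('g, 'b) monoid_scheme \<Rightarrow> ('g \<Rightarrow> complex) \<Rightarrow> ('g \<Rightarrow> complex) \<Rightarrow> ('g \<Rightarrow> complex)
    \<Rightarrow> ('g \<Rightarrow> complex) list \<Rightarrow> 'g list \<Rightarrow> complex" where
  "antipode G \<iota> \<alpha> \<beta> \<psi>s = (\<lambda>gs. - tens \<psi>s gs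
     - (\<Sum>A\<in>{A. A \<subseteq> {1..length \<psi>s + 1} \<and> A \<noteq> {} \<and> A \<noteq> {1..length \<psi>s + 1}}.
          cop_coef G \<alpha> \<psi>s A * cop_coef G \<beta> \<psi>s ({1..length \<psi>s + 1} - A) *
          hprod \<iota> (card A) (antipode G \<iota> \<alpha> \<beta> (cop_facs G \<iota> \<alpha> \<psi>s A))
                (tens (cop_facs G \<iota> \<beta> \<psi>s ({1..length \<psi>s + 1} - A))) gs))"
  by auto
termination
  by (relation "measure (\<lambda>(G, \<iota>, \<alpha>, \<beta>, \<psi>s). length \<psi>s)")
     (auto simp del: atLeastAtMost_iff intro!: cop_facs_shorter)

end

theory Submission
  imports Defs
begin

declare antipode.simps[simp del]

lemma sorted_le_last: "sorted xs \<Longrightarrow> (y::nat) \<in> set xs \<Longrightarrow> y \<le> last xs"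
  by (induction xs) auto

lemma tens_rep: "tens (replicate k f) gs = (if length gs = k then (\<Prod>i<k. f (gs!i)) else 0)"
  unfolding tens_def by (auto intro!: prod.cong)

lemma tens_zero: "f \<in> set fs \<Longrightarrow> (\<forall>g. f g = 0) \<Longrightarrow> tens fs gs = 0"
proof -
  assume a: "f \<in> set fs" "\<forall>g. f g = 0"
  then obtain i where i: "i < length fs" "fs ! i = f" by (auto simp: in_set_conv_nth)
  show ?thesis
  proof (cases "length gs = length fs")
    case True
    have "(\<Prod>i<length fs. (fs ! i) (gs ! i)) = 0"
      using i a by (intro prod_zero) auto
    thus ?thesis using True by (simp add: tens_def)
  qed (simp add: tens_def)
qed

lemma hprod_zero: "(\<And>gs. h gs = 0) \<Longrightarrow> hprod \<iota> m f h gs = 0"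
  by (simp add: hprod_def)

lemma facs_init:
  assumes "1 \<le> j" "j \<le> m"
  shows "cop_facs G \<iota> \<alpha> (replicate m \<tau>) {1..j} = replicate (j-1) \<tau>"
proof -
  have e: "{1..j} = {1..<Suc j}" by auto
  have b: "butlast [1..<Suc j] = [1..<j]" using assms by (simp add: upt_Suc_append)
  have "cop_facs G \<iota> \<alpha> (replicate m \<tau>) {1..j} = map (\<lambda>a. \<tau>) [1..<j]"
    unfolding cop_facs_def e sorted_list_of_set_range b
    using assms by (intro map_cong) auto
  thus ?thesis by (simp add: map_replicate_const)
qed

lemma facs_tail:
  assumes "j \<le> m"
  shows "cop_facs G \<iota> \<beta> (replicate m \<tau>) {Suc j..m+1} = replicate (m-j) \<tau>"
proof -
  have e: "{Suc j..m+1} = {Suc j..<Suc (Suc m)}" by auto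
  have b: "butlast [Suc j..<Suc (Suc m)] = [Suc j..<Suc m]" using assms by (simp add: upt_Suc_append)
  have "cop_facs G \<iota> \<beta> (replicate m \<tau>) {Suc j..m+1} = map (\<lambda>a. \<tau>) [Suc j..<Suc m]"
    unfolding cop_facs_def e sorted_list_of_set_range b
    using assms by (intro map_cong) auto
  thus ?thesis by (simp add: map_replicate_const del: upt_Suc)
qed

lemma telescope:
  fixes t c :: "nat \<Rightarrow> complex"
  shows "(\<Prod>i<m. t i - c i) = (\<Prod>i<m. t i)
     - (\<Sum>k<m. (\<Prod>i<k. t i - c i) * c k * (\<Prod>i\<in>{Suc k..<m}. t i))"
proof (induction m)
  case 0
  then show ?case by simp
next
  case (Suc m)
  have s: "(\<Sum>k<m. (\<Prod>i<k. t i - c i) * c k * (\<Prod>i\<in>{Suc k..<Suc m}. t i))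
        = (\<Sum>k<m. (\<Prod>i<k. t i - c i) * c k * (\<Prod>i\<in>{Suc k..<m}. t i)) * t m"
    by (auto simp: sum_distrib_right prod.atLeastLessThan_Suc mult.assoc intro!: sum.cong)
  define P where "P = (\<Prod>i<m. t i - c i)"
  define T where "T = (\<Prod>i<m. t i)"
  define R where "R = (\<Sum>k<m. (\<Prod>i<k. t i - c i) * c k * (\<Prod>i\<in>{Suc k..<m}. t i))"
  have ih: "P = T - R" using Suc.IH unfolding P_def T_def R_def .
  have "(\<Prod>i<Suc m. t i - c i) = P * (t m - c m)" by (simp add: P_def)
  also have "\<dots> = (T - R) * t m - P * c m" using ih by (simp add: algebra_simps flip: distrib_right)
  also have "\<dots> = (\<Prod>i<Suc m. t i)
     - (\<Sum>k<Suc m. (\<Prod>i<k. t i - c i) * c k * (\<Prod>i\<in>{Suc k..<Suc m}. t i))"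
    using s by (simp add: T_def R_def P_def algebra_simps)
  finally show ?case .
qed

lemma coef_lt:
  assumes "finite A" "A \<noteq> {}" "A \<subseteq> {1..m}"
  shows "cop_coef G \<alpha> (replicate m \<tau>) A = ip G \<tau> \<alpha>"
proof -
  have "Max A \<in> A" using assms by simp
  hence "Max A \<in> {1..m}" using assms(3) by blast
  hence "Max A - 1 < m" "Max A < m + 1" by auto
  hence "replicate m \<tau> ! (Max A - 1) = \<tau>" "Max A < length (replicate m \<tau>) + 1" by auto
  thus ?thesis by (simp add: cop_coef_def)
qed

lemma coef_full:
  assumes "finite A" "m+1 \<in> A" "A \<subseteq> {1..m+1}"
  shows "cop_coef G \<alpha> (replicate m \<tau>) A = 1"
proof -
  have "Max A = m+1" using assms by (intro Max_eqI) auto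
  thus ?thesis by (simp add: cop_coef_def)
qed

lemma antipode_unfold:
  "antipode G \<iota> \<alpha> \<beta> \<psi>s gs = - tens \<psi>s gs
     - (\<Sum>A\<in>{A. A \<subseteq> {1..length \<psi>s + 1} \<and> A \<noteq> {} \<and> A \<noteq> {1..length \<psi>s + 1}}.
          cop_coef G \<alpha> \<psi>s A * cop_coef G \<beta> \<psi>s ({1..length \<psi>s + 1} - A) *
          hprod \<iota> (card A) (antipode G \<iota> \<alpha> \<beta> (cop_facs G \<iota> \<alpha> \<psi>s A))
                (tens (cop_facs G \<iota> \<beta> \<psi>s ({1..length \<psi>s + 1} - A))) gs)"
  by (subst antipode.simps) simp

lemma case1:
  assumes "ip G \<tau> \<alpha> = 0" "ip G \<tau> \<beta> = 0"
  shows "antipode G \<iota> \<alpha> \<beta> (replicate m \<tau>) gs = - tens (replicate m \<tau>) gs"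
proof -
  let ?S = "{A. A \<subseteq> {1..m + 1} \<and> A \<noteq> {} \<and> A \<noteq> {1..m + 1}}"
  have z: "cop_coef G \<alpha> (replicate m \<tau>) A * cop_coef G \<beta> (replicate m \<tau>) ({1..m + 1} - A) = 0"
    if "A \<in> ?S" for A
  proof (cases "m+1 \<in> A")
    case True
    have "finite A" using that finite_subset by auto
    have s1: "{1..m + 1} - A \<subseteq> {1..m}" using True by (auto simp: le_Suc_eq)
    have s2: "{1..m + 1} - A \<noteq> {}" using that by auto
    have "cop_coef G \<beta> (replicate m \<tau>) ({1..m + 1} - A) = ip G \<tau> \<beta>"
      using s1 s2 by (intro coef_lt) auto
    thus ?thesis using assms by simp
  next
    case False
    have "finite A" using that finite_subset by auto
    have "cop_coef G \<alpha> (replicate m \<tau>) A = ip G \<tau> \<alpha>"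
      using that False \<open>finite A\<close> by (intro coef_lt) (auto simp: subset_iff le_Suc_eq)
    thus ?thesis using assms by simp
  qed
  have "(\<Sum>A\<in>?S. cop_coef G \<alpha> (replicate m \<tau>) A * cop_coef G \<beta> (replicate m \<tau>) ({1..m + 1} - A) *
          hprod \<iota> (card A) (antipode G \<iota> \<alpha> \<beta> (cop_facs G \<iota> \<alpha> (replicate m \<tau>) A))
                (tens (cop_facs G \<iota> \<beta> (replicate m \<tau>) ({1..m + 1} - A))) gs) = 0"
    by (intro sum.neutral ballI) (simp only: z mult_zero_left)
  thus ?thesis
    by (subst antipode_unfold) (simp only: length_replicate diff_zero)
qed

lemma zero_facs:
  assumes A: "A \<subseteq> {1..m}" "A \<noteq> {}" "\<forall>k<m. A \<noteq> {1..Suc k}" and z: "ip G \<tau> \<beta> = 0"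
  shows "tens (cop_facs G \<iota> \<beta> (replicate m \<tau>) ({1..m+1} - A)) gs = 0"
proof -
  have fA: "finite A" using A finite_subset by blast
  define M where "M = Max A"
  have MA: "M \<in> A" using fA A by (simp add: M_def)
  have Mle: "\<forall>x\<in>A. x \<le> M" using fA by (simp add: M_def)
  have M1: "1 \<le> M" "M \<le> m" using MA A by auto
  have "A \<noteq> {1..M}" using A(3) M1 by (metis Suc_pred' less_le_trans less_Suc_eq_le zero_less_one not_less)
  moreover have "A \<subseteq> {1..M}" using A(1) Mle by auto
  ultimately have "\<not> {1..M} \<subseteq> A" by blast
  then obtain x where x: "x \<in> {1..M}" "x \<notin> A" by blast
  define D where "D = {x\<in>{1..M}. x \<notin> A}"
  have fD: "finite D" "D \<noteq> {}" using x by (auto simp: D_def)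
  define b where "b = Max D"
  have bD: "b \<in> D" using fD by (simp add: b_def)
  have bmax: "\<forall>y\<in>D. y \<le> b" using fD by (simp add: b_def)
  have bl: "b < M" using bD MA by (auto simp: D_def order.order_iff_strict)
  have b1: "b + 1 \<in> A"
  proof (rule ccontr)
    assume "b + 1 \<notin> A"
    hence "b + 1 \<in> D" using bl bD by (auto simp: D_def)
    thus False using bmax by fastforce
  qed
  define B where "B = {1..m+1} - A"
  have bB: "b \<in> B" "b + 1 \<notin> B" "b \<ge> 1" "b < m" using bD b1 bl M1 A by (auto simp: B_def D_def)
  have mB: "m + 1 \<in> B" using A by (auto simp: B_def)
  define xs where "xs = sorted_list_of_set B"
  have fB: "finite B" by (simp add: B_def)
  have sx: "set xs = B" "sorted xs" using fB by (auto simp: xs_def)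
  have "m + 1 \<le> last xs" using sorted_le_last[OF sx(2)] sx(1) mB by blast
  hence "b \<noteq> last xs" using bB by auto
  moreover have "xs \<noteq> []" using sx mB by auto
  ultimately have "b \<in> set (butlast xs)" using sx bB
    by (metis append_butlast_last_id butlast.simps(2) in_set_butlast_appendI last_snoc rotate1.simps(2) set_rotate1 Un_iff set_append empty_iff empty_set insert_iff list.set(2))
  hence mem: "(\<lambda>g. ip G (replicate m \<tau> ! (b - 1)) \<beta> * \<iota> g) \<in> set (cop_facs G \<iota> \<beta> (replicate m \<tau>) B)"
    unfolding cop_facs_def xs_def[symmetric] using bB by force
  have "replicate m \<tau> ! (b - 1) = \<tau>" using bB by auto
  hence "\<forall>g. ip G (replicate m \<tau> ! (b - 1)) \<beta> * \<iota> g = 0" using z by simp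
  from tens_zero[OF mem this] show ?thesis by (simp add: B_def)
qed

lemma hprod_eval:
  assumes "k < m"
  shows "hprod \<iota> (Suc k) (\<lambda>gs. - tens (replicate k \<sigma>) gs) (tens (replicate (m - Suc k) \<tau>)) gs
    = (if length gs = m then - ((\<Prod>i<k. \<sigma> (gs!i)) * \<iota> (gs!k) * (\<Prod>i\<in>{Suc k..<m}. \<tau> (gs!i))) else 0)"
proof (cases "length gs = m")
  case True
  have sh: "(\<Prod>i\<in>{Suc k..<m}. \<tau> (gs!i)) = (\<Prod>i<m - Suc k. \<tau> (gs!(i + Suc k)))"
    using prod.shift_bounds_nat_ivl[of "\<lambda>i. \<tau> (gs!i)" 0 "Suc k" "m - Suc k"] assms
    by (simp add: atLeast0LessThan)
  have "(\<Prod>i<m - Suc k. \<tau> (drop (Suc k) gs ! i)) = (\<Prod>i<m - Suc k. \<tau> (gs!(i + Suc k)))"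
    using True assms by (intro prod.cong) (auto simp: add.commute)
  moreover have "(\<Prod>i<k. \<sigma> (take k gs ! i)) = (\<Prod>i<k. \<sigma> (gs ! i))"
    by (intro prod.cong) auto
  ultimately show ?thesis using True assms sh by (simp add: hprod_def tens_rep min_def)
next
  case False
  then show ?thesis using assms by (auto simp: hprod_def tens_rep)
qed

lemma case2:
  assumes a: "ip G \<tau> \<alpha> = 1" and b: "ip G \<tau> \<beta> = 0"
  shows "antipode G \<iota> \<alpha> \<beta> (replicate m \<tau>) gs = - tens (replicate m (\<lambda>g. \<tau> g - \<iota> g)) gs"
proof (induction m arbitrary: gs rule: less_induct)
  case (less m)
  let ?S = "{A. A \<subseteq> {1..m + 1} \<and> A \<noteq> {} \<and> A \<noteq> {1..m + 1}}"
  let ?F = "\<lambda>A. cop_coef G \<alpha> (replicate m \<tau>) A * cop_coef G \<beta> (replicate m \<tau>) ({1..m + 1} - A) *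
          hprod \<iota> (card A) (antipode G \<iota> \<alpha> \<beta> (cop_facs G \<iota> \<alpha> (replicate m \<tau>) A))
                (tens (cop_facs G \<iota> \<beta> (replicate m \<tau>) ({1..m + 1} - A))) gs"
  let ?T = "(\<lambda>k. {1..Suc k}) ` {..<m}"
  let ?\<sigma> = "\<lambda>g. \<tau> g - \<iota> g"
  have fS: "finite ?S" by (rule finite_subset[of _ "Pow {1..m+1}"]) auto
  have TS: "?T \<subseteq> ?S" by auto
  have zero: "?F A = 0" if "A \<in> ?S - ?T" for A
  proof (cases "m+1 \<in> A")
    case True
    have s1: "{1..m + 1} - A \<subseteq> {1..m}" using True by (auto simp: le_Suc_eq)
    have s2: "{1..m + 1} - A \<noteq> {}" using that by auto
    have "cop_coef G \<beta> (replicate m \<tau>) ({1..m + 1} - A) = ip G \<tau> \<beta>"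
      using s1 s2 by (intro coef_lt) auto
    thus ?thesis using b by simp
  next
    case False
    have A: "A \<subseteq> {1..m}" using that False by (auto simp: subset_iff le_Suc_eq)
    have "\<forall>k<m. A \<noteq> {1..Suc k}" using that by auto
    hence "tens (cop_facs G \<iota> \<beta> (replicate m \<tau>) ({1..m+1} - A)) gs' = 0" for gs'
      using zero_facs[OF A _ _ b] that by auto
    thus ?thesis by (simp add: hprod_zero)
  qed
  have "sum ?F ?S = sum ?F ?T"
    using fS TS zero by (intro sum.mono_neutral_right) auto
  also have "\<dots> = (\<Sum>k<m. ?F {1..Suc k})"
    by (subst sum.reindex) (auto simp: inj_on_def)
  also have "\<dots> = (\<Sum>k<m. hprod \<iota> (Suc k) (\<lambda>gs. - tens (replicate k ?\<sigma>) gs) (tens (replicate (m - Suc k) \<tau>)) gs)"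
  proof (intro sum.cong refl)
    fix k assume k: "k \<in> {..<m}"
    have c1: "cop_coef G \<alpha> (replicate m \<tau>) {1..Suc k} = 1" using k a by (subst coef_lt) auto
    have e: "{1..m + 1} - {1..Suc k} = {Suc (Suc k)..m+1}" by auto
    have c2: "cop_coef G \<beta> (replicate m \<tau>) {Suc (Suc k)..m+1} = 1" using k by (intro coef_full) auto
    have f1: "cop_facs G \<iota> \<alpha> (replicate m \<tau>) {1..Suc k} = replicate k \<tau>"
      using facs_init[of "Suc k" m] k by simp
    have f2: "cop_facs G \<iota> \<beta> (replicate m \<tau>) {Suc (Suc k)..m+1} = replicate (m - Suc k) \<tau>"
      using facs_tail[of "Suc k" m] k by simp
    have ih: "antipode G \<iota> \<alpha> \<beta> (replicate k \<tau>) = (\<lambda>gs. - tens (replicate k ?\<sigma>) gs)"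
      using less.IH k by auto
    show "?F {1..Suc k} = hprod \<iota> (Suc k) (\<lambda>gs. - tens (replicate k ?\<sigma>) gs) (tens (replicate (m - Suc k) \<tau>)) gs"
      unfolding e c1 c2 f1 f2 ih by simp
  qed
  also have "\<dots> = (if length gs = m then - (\<Sum>k<m. (\<Prod>i<k. ?\<sigma> (gs!i)) * \<iota> (gs!k) * (\<Prod>i\<in>{Suc k..<m}. \<tau> (gs!i))) else 0)"
    by (simp add: hprod_eval sum_negf)
  finally have sF: "sum ?F ?S = \<dots>" .
  show ?case
  proof (cases "length gs = m")
    case True
    have "antipode G \<iota> \<alpha> \<beta> (replicate m \<tau>) gs = - tens (replicate m \<tau>) gs - sum ?F ?S"
      by (subst antipode_unfold) (simp only: length_replicate)
    also have "\<dots> = - (\<Prod>i<m. \<tau> (gs!i)) + (\<Sum>k<m. (\<Prod>i<k. ?\<sigma> (gs!i)) * \<iota> (gs!k) * (\<Prod>i\<in>{Suc k..<m}. \<tau> (gs!i)))"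
      using True sF by (simp add: tens_rep)
    also have "\<dots> = - (\<Prod>i<m. ?\<sigma> (gs!i))"
      using telescope[of "\<lambda>i. \<tau> (gs!i)" "\<lambda>i. \<iota> (gs!i)" m] by simp
    finally show ?thesis using True by (simp add: tens_rep)
  next
    case False
    have "antipode G \<iota> \<alpha> \<beta> (replicate m \<tau>) gs = - tens (replicate m \<tau>) gs - sum ?F ?S"
      by (subst antipode_unfold) (simp only: length_replicate)
    then show ?thesis using False sF by (simp add: tens_rep)
  qed
qed

theorem mainTheorem11:
  fixes G :: "('g, 'b) monoid_scheme"
    and \<iota> \<alpha> \<beta> \<tau> :: "'g \<Rightarrow> complex" and n :: nat
  assumes "group G" and "finite (carrier G)" and "carrier G \<noteq> {\<one>\<^bsub>G\<^esub>}"
    and "scf G \<iota>" and "scf G \<alpha>" and "scf G \<beta>"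
    and "ip G \<iota> \<alpha> = 1" and "ip G \<iota> \<beta> = 1"
    and "scf G \<tau>" and "n \<ge> 1"
  shows "((\<forall>g\<in>carrier G. \<alpha> g = \<beta> g) \<and> (\<exists>g\<in>carrier G. \<tau> g \<noteq> 0) \<and> ip G \<tau> \<beta> = 0 \<and>
          (\<forall>f. scf G f \<longrightarrow> (\<exists>a b. \<forall>g\<in>carrier G. f g = a * \<tau> g + b * \<iota> g))
        \<longrightarrow> (\<forall>gs. set gs \<subseteq> carrier G \<longrightarrow>
              antipode G \<iota> \<alpha> \<beta> (replicate (n - 1) \<tau>) gs = - tens (replicate (n - 1) \<tau>) gs))
       \<and> ((\<exists>g\<in>carrier G. \<alpha> g \<noteq> \<beta> g) \<and> ip G \<tau> \<alpha> = 1 \<and> ip G \<tau> \<beta> = 0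
        \<longrightarrow> (\<forall>gs. set gs \<subseteq> carrier G \<longrightarrow>
              antipode G \<iota> \<alpha> \<beta> (replicate (n - 1) \<tau>) gs
                = - tens (replicate (n - 1) (\<lambda>g. \<tau> g - \<iota> g)) gs))"
proof (intro conjI impI allI)
  fix gs
  assume h: "(\<forall>g\<in>carrier G. \<alpha> g = \<beta> g) \<and> (\<exists>g\<in>carrier G. \<tau> g \<noteq> 0) \<and> ip G \<tau> \<beta> = 0 \<and>
          (\<forall>f. scf G f \<longrightarrow> (\<exists>a b. \<forall>g\<in>carrier G. f g = a * \<tau> g + b * \<iota> g))"
  have "ip G \<tau> \<alpha> = ip G \<tau> \<beta>" unfolding ip_def using h by (intro arg_cong2[where f="(/)"] sum.cong) auto
  thus "antipode G \<iota> \<alpha> \<beta> (replicate (n - 1) \<tau>) gs = - tens (replicate (n - 1) \<tau>) gs"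
    using h case1 by metis
next
  fix gs
  assume h: "(\<exists>g\<in>carrier G. \<alpha> g \<noteq> \<beta> g) \<and> ip G \<tau> \<alpha> = 1 \<and> ip G \<tau> \<beta> = 0"
  thus "antipode G \<iota> \<alpha> \<beta> (replicate (n - 1) \<tau>) gs = - tens (replicate (n - 1) (\<lambda>g. \<tau> g - \<iota> g)) gs"
    using case2 by blast
qed

end
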